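(* For all integers $k\ge 2$ and $n\ge 1$, $$\mathrm{spt}k_d(n)+\mathrm{spt}(k-1)_d(n)=\mathrm{spt}(k-1)_d(n-k+1)+p_d(n-k+1).$$
   Context: For a partition $\pi$, $s(\pi)$ denotes its smallest part. For $j\ge1$, $\mathrm{Spt}j_d(n)$ is the set of partitions $\pi$ of $n$ in which the smallest part $s(\pi)$ occurs exactly $j$ times and all remaining parts (those larger than $s(\pi)$) are pairwise distinct; $\mathrm{spt}j_d(n)=|\mathrm{Spt}j_d(n)|$, with $\mathrm{spt}j_d(n)=0$ for $n\le 0$. $p_d(n)$ is the number of partitions of $n$ into distinct parts, with $p_d(0)=1$ and $p_d(n)=0$ for $n<0$. *)

theory Defs
  imports Main "HOL-Library.Multiset"
begin

definition is_partition :: "nat multiset \<Rightarrow> nat \<Rightarrow> bool" where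
  "is_partition \<pi> m \<longleftrightarrow> (\<forall>x\<in>#\<pi>. 0 < x) \<and> sum_mset \<pi> = m"

definition smallest_part :: "nat multiset \<Rightarrow> nat" where
  "smallest_part \<pi> = Min (set_mset \<pi>)"

definition Sptd_set :: "nat \<Rightarrow> int \<Rightarrow> nat multiset set" where
  "Sptd_set j n = {\<pi>. 0 < n \<and> is_partition \<pi> (nat n) \<and> \<pi> \<noteq> {#} \<and>
      count \<pi> (smallest_part \<pi>) = j \<and>
      (\<forall>x\<in>#\<pi>. smallest_part \<pi> < x \<longrightarrow> count \<pi> x = 1)}"

definition sptd :: "nat \<Rightarrow> int \<Rightarrow> nat" where
  "sptd j n = card (Sptd_set j n)"

definition pd :: "int \<Rightarrow> nat" where
  "pd n = (if n < 0 then 0 else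
     card {\<pi>. is_partition \<pi> (nat n) \<and> (\<forall>x\<in>#\<pi>. count \<pi> x = 1)})"

end

theory Submission
  imports Defs
begin

definition Q :: "nat \<Rightarrow> int \<Rightarrow> (nat \<times> nat set) set" where
  "Q j n = {(s,D). 0 < s \<and> finite D \<and> (\<forall>x\<in>D. s < x) \<and> int (j*s + \<Sum>D) = n}"

definition PS :: "int \<Rightarrow> nat set set" where
  "PS n = {D. finite D \<and> 0 \<notin> D \<and> int (\<Sum>D) = n}"

lemma sum_mset_mset_set: "finite D \<Longrightarrow> sum_mset (mset_set D) = (\<Sum>D::nat)"
  using sum_unfold_sum_mset[of id D] by simp

lemma smallest_rep:
  assumes "j \<ge> 1" "finite D" "\<forall>x\<in>D. s < x"
  shows "smallest_part (replicate_mset j s + mset_set D) = s"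
proof -
  have "set_mset (replicate_mset j s + mset_set D) = insert s D" using assms by auto
  then show ?thesis unfolding smallest_part_def using assms
    by (metis Min_insert2 finite_insert less_imp_le)
qed

lemma Sptd_rep_eq:
  assumes "\<pi> \<in> Sptd_set j n"
  shows "\<pi> = replicate_mset j (smallest_part \<pi>) + mset_set (set_mset \<pi> - {smallest_part \<pi>})"
proof (rule multiset_eqI)
  fix x
  let ?s = "smallest_part \<pi>"
  from assms have c: "count \<pi> ?s = j" and d: "\<forall>x\<in>#\<pi>. ?s < x \<longrightarrow> count \<pi> x = 1"
    by (auto simp: Sptd_set_def)
  have le: "x \<in># \<pi> \<Longrightarrow> ?s \<le> x" unfolding smallest_part_def by simp
  show "count \<pi> x = count (replicate_mset j ?s + mset_set (set_mset \<pi> - {?s})) x"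
  proof (cases "x = ?s")
    case True then show ?thesis using c by simp
  next
    case False
    show ?thesis
    proof (cases "x \<in># \<pi>")
      case True
      then have "?s < x" using le False by force
      then show ?thesis using d True False by simp
    next
      case F: False
      then show ?thesis using False by (simp add: not_in_iff)
    qed
  qed
qed

lemma Q_rep:
  assumes "j \<ge> 1"
  shows "bij_betw (\<lambda>(s,D). replicate_mset j s + mset_set D) (Q j n) (Sptd_set j n)"
proof (rule bij_betw_byWitness[where f' = "\<lambda>\<pi>. (smallest_part \<pi>, set_mset \<pi> - {smallest_part \<pi>})"])
  show "\<forall>a\<in>Q j n. (\<lambda>\<pi>. (smallest_part \<pi>, set_mset \<pi> - {smallest_part \<pi>}))
          ((\<lambda>(s,D). replicate_mset j s + mset_set D) a) = a"
  proof
    fix a assume "a \<in> Q j n"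
    then obtain s D where a: "a = (s,D)" "finite D" "\<forall>x\<in>D. s < x" unfolding Q_def by auto
    have "set_mset (replicate_mset j s + mset_set D) = insert s D" using assms a by auto
    moreover have "s \<notin> D" using a by auto
    ultimately show "(\<lambda>\<pi>. (smallest_part \<pi>, set_mset \<pi> - {smallest_part \<pi>}))
          ((\<lambda>(s,D). replicate_mset j s + mset_set D) a) = a"
      using smallest_rep[OF assms a(2,3)] a by simp
  qed
  show "\<forall>a'\<in>Sptd_set j n. (\<lambda>(s,D). replicate_mset j s + mset_set D)
      ((\<lambda>\<pi>. (smallest_part \<pi>, set_mset \<pi> - {smallest_part \<pi>})) a') = a'"
    using Sptd_rep_eq by auto
  show "(\<lambda>(s,D). replicate_mset j s + mset_set D) ` Q j n \<subseteq> Sptd_set j n"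
  proof
    fix \<pi> assume "\<pi> \<in> (\<lambda>(s,D). replicate_mset j s + mset_set D) ` Q j n"
    then obtain s D where p: "\<pi> = replicate_mset j s + mset_set D" and
      q: "0 < s" "finite D" "\<forall>x\<in>D. s < x" "int (j*s + \<Sum>D) = n" unfolding Q_def by auto
    have sm: "smallest_part \<pi> = s" using smallest_rep[OF assms q(2,3)] p by simp
    have sD: "s \<notin> D" using q by auto
    have "0 < n" using q assms by (metis of_nat_0_less_iff add_gr_0 mult_pos_pos less_le_trans zero_less_one)
    moreover have "is_partition \<pi> (nat n)"
    proof -
      have "nat n = j*s + \<Sum>D" using q(4) by (metis nat_int)
      then show ?thesis unfolding is_partition_def p
        using q assms by (auto simp: sum_mset_mset_set)
    qed
    moreover have "\<pi> \<noteq> {#}" using p assms by auto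
    moreover have "count \<pi> (smallest_part \<pi>) = j" using sm p sD q by simp
    moreover have "\<forall>x\<in>#\<pi>. smallest_part \<pi> < x \<longrightarrow> count \<pi> x = 1" using sm p q by auto
    ultimately show "\<pi> \<in> Sptd_set j n" unfolding Sptd_set_def by blast
  qed
  show "(\<lambda>\<pi>. (smallest_part \<pi>, set_mset \<pi> - {smallest_part \<pi>})) ` Sptd_set j n \<subseteq> Q j n"
  proof
    fix a assume "a \<in> (\<lambda>\<pi>. (smallest_part \<pi>, set_mset \<pi> - {smallest_part \<pi>})) ` Sptd_set j n"
    then obtain \<pi> where a: "a = (smallest_part \<pi>, set_mset \<pi> - {smallest_part \<pi>})"
      and p: "\<pi> \<in> Sptd_set j n" by auto
    let ?s = "smallest_part \<pi>" and ?D = "set_mset \<pi> - {smallest_part \<pi>}"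
    from p have pp: "0 < n" "is_partition \<pi> (nat n)" "\<pi> \<noteq> {#}" unfolding Sptd_set_def by auto
    have sin: "?s \<in># \<pi>" using pp(3) unfolding smallest_part_def by simp
    have "0 < ?s" using sin pp(2) unfolding is_partition_def by auto
    moreover have "\<forall>x\<in>?D. ?s < x" unfolding smallest_part_def by (auto simp: order_le_neq_trans)
    moreover have "int (j * ?s + \<Sum>?D) = n"
    proof -
      have "sum_mset \<pi> = j * ?s + \<Sum>?D"
        using Sptd_rep_eq[OF p] by (metis finite_Diff finite_set_mset sum_mset.union
            sum_mset_replicate_mset sum_mset_mset_set of_nat_id)
      then have "nat n = j * ?s + \<Sum>?D" using pp(2) unfolding is_partition_def by simp
      then show ?thesis using pp(1) by (metis nat_0_le order_less_imp_le)
    qed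
    ultimately show "a \<in> Q j n" unfolding Q_def a by auto
  qed
qed

lemma PS_rep:
  assumes "n \<ge> 0"
  shows "bij_betw mset_set (PS n) {\<pi>. is_partition \<pi> (nat n) \<and> (\<forall>x\<in>#\<pi>. count \<pi> x = 1)}"
proof (rule bij_betw_byWitness[where f' = set_mset])
  show "\<forall>a\<in>PS n. set_mset (mset_set a) = a" unfolding PS_def by auto
  show "\<forall>a'\<in>{\<pi>. is_partition \<pi> (nat n) \<and> (\<forall>x\<in>#\<pi>. count \<pi> x = 1)}. mset_set (set_mset a') = a'"
  proof
    fix \<pi> assume "\<pi> \<in> {\<pi>. is_partition \<pi> (nat n) \<and> (\<forall>x\<in>#\<pi>. count \<pi> x = 1)}"
    then have c: "\<forall>x\<in>#\<pi>. count \<pi> x = 1" by auto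
    show "mset_set (set_mset \<pi>) = \<pi>"
    proof (rule multiset_eqI)
      fix x show "count (mset_set (set_mset \<pi>)) x = count \<pi> x"
        using c by (cases "x \<in># \<pi>") (auto simp: not_in_iff)
    qed
  qed
  show "mset_set ` PS n \<subseteq> {\<pi>. is_partition \<pi> (nat n) \<and> (\<forall>x\<in>#\<pi>. count \<pi> x = 1)}"
  proof
    fix \<pi> assume "\<pi> \<in> mset_set ` PS n"
    then obtain D where D: "\<pi> = mset_set D" "finite D" "0 \<notin> D" "int (\<Sum>D) = n"
      unfolding PS_def by auto
    have "nat n = \<Sum>D" using D(4) by (metis nat_int)
    then show "\<pi> \<in> {\<pi>. is_partition \<pi> (nat n) \<and> (\<forall>x\<in>#\<pi>. count \<pi> x = 1)}"
      using D unfolding is_partition_def by (auto simp: sum_mset_mset_set intro!: Nat.gr0I)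
  qed
  show "set_mset ` {\<pi>. is_partition \<pi> (nat n) \<and> (\<forall>x\<in>#\<pi>. count \<pi> x = 1)} \<subseteq> PS n"
  proof
    fix D assume "D \<in> set_mset ` {\<pi>. is_partition \<pi> (nat n) \<and> (\<forall>x\<in>#\<pi>. count \<pi> x = 1)}"
    then obtain \<pi> where D: "D = set_mset \<pi>" and p: "is_partition \<pi> (nat n)"
      and c: "\<forall>x\<in>#\<pi>. count \<pi> x = 1" by auto
    have e: "mset_set (set_mset \<pi>) = \<pi>"
    proof (rule multiset_eqI)
      fix x show "count (mset_set (set_mset \<pi>)) x = count \<pi> x"
        using c by (cases "x \<in># \<pi>") (auto simp: not_in_iff)
    qed
    have "sum_mset \<pi> = \<Sum>D" using e D sum_mset_mset_set[of D] by simp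
    then have "nat n = \<Sum>D" using p unfolding is_partition_def by simp
    then have "int (\<Sum>D) = n" using assms by (metis nat_0_le)
    then show "D \<in> PS n" using p D unfolding PS_def is_partition_def by auto
  qed
qed

lemma pd_PS: "pd n = card (PS n)"
proof (cases "n < 0")
  case True
  then have "\<forall>D. int (\<Sum>D) \<noteq> n" by (metis of_nat_0_le_iff not_less)
  then have "PS n = {}" unfolding PS_def by blast
  then show ?thesis using True unfolding pd_def by simp
next
  case False
  then show ?thesis unfolding pd_def using bij_betw_same_card[OF PS_rep[of n]] by simp
qed

lemma sptd_Q: "j \<ge> 1 \<Longrightarrow> sptd j n = card (Q j n)"
  unfolding sptd_def using bij_betw_same_card[OF Q_rep] by metis

lemma finite_Q: assumes "j \<ge> 1" shows "finite (Q j n)"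
proof (rule finite_subset[of _ "{0..nat n} \<times> Pow {0..nat n}"])
  show "Q j n \<subseteq> {0..nat n} \<times> Pow {0..nat n}"
  proof
    fix a assume "a \<in> Q j n"
    then obtain s D where a: "a = (s,D)" "finite D" "int (j*s + \<Sum>D) = n" unfolding Q_def by auto
    have nn: "nat n = j*s + \<Sum>D" using a(3) by (metis nat_int)
    have "s \<le> j * s" using assms by simp
    then have "s \<le> nat n" using nn by linarith
    moreover have "\<forall>x\<in>D. x \<le> nat n" using nn a(2) member_le_sum[of _ D id]
      by (metis id_apply le_add2 order_trans sum.cong zero_le)
    ultimately show "a \<in> {0..nat n} \<times> Pow {0..nat n}" using a by auto
  qed
qed auto

lemma finite_PS: "finite (PS n)"
proof (rule finite_subset[of _ "Pow {0..nat n}"])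
  show "PS n \<subseteq> Pow {0..nat n}"
  proof
    fix D assume "D \<in> PS n"
    then have a: "finite D" "int (\<Sum>D) = n" unfolding PS_def by auto
    have nn: "nat n = \<Sum>D" using a(2) by (metis nat_int)
    have "\<forall>x\<in>D. x \<le> nat n" using nn a(1) member_le_sum[of _ D id]
      by (metis id_apply sum.cong zero_le)
    then show "D \<in> Pow {0..nat n}" by auto
  qed
qed auto

lemma card_split: "finite S \<Longrightarrow> card S = card {x\<in>S. P x} + card {x\<in>S. \<not> P x}"
proof -
  assume f: "finite S"
  have "S = {x\<in>S. P x} \<union> {x\<in>S. \<not> P x}" by auto
  then show ?thesis using f card_Un_disjoint[of "{x\<in>S. P x}" "{x\<in>S. \<not> P x}"]
    by (metis (no_types, lifting) disjoint_iff finite_Un mem_Collect_eq)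
qed


lemma bij1:
  "card {a\<in>Q (Suc K) n. 2 \<le> fst a} = card {b\<in>Q K (n - int K). Suc (fst b) \<in> snd b}"
proof (rule bij_betw_same_card[of "\<lambda>(s,D). (s - 1, insert s D)"],
       rule bij_betw_byWitness[where f' = "\<lambda>(t,E). (Suc t, E - {Suc t})"])
  show "\<forall>a\<in>{a\<in>Q (Suc K) n. 2 \<le> fst a}. (\<lambda>(t,E). (Suc t, E - {Suc t})) ((\<lambda>(s,D). (s - 1, insert s D)) a) = a"
    unfolding Q_def by auto
  show "\<forall>a\<in>{b\<in>Q K (n - int K). Suc (fst b) \<in> snd b}. (\<lambda>(s,D). (s - 1, insert s D)) ((\<lambda>(t,E). (Suc t, E - {Suc t})) a) = a"
    unfolding Q_def by (auto simp: insert_absorb)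
  show "(\<lambda>(s,D). (s - 1, insert s D)) ` {a\<in>Q (Suc K) n. 2 \<le> fst a} \<subseteq> {b\<in>Q K (n - int K). Suc (fst b) \<in> snd b}"
  proof
    fix b assume "b \<in> (\<lambda>(s,D). (s - 1, insert s D)) ` {a\<in>Q (Suc K) n. 2 \<le> fst a}"
    then obtain s D where b: "b = (s - 1, insert s D)" and q: "2 \<le> s" "finite D" "\<forall>x\<in>D. s < x"
      "int (Suc K * s + \<Sum>D) = n" unfolding Q_def by auto
    obtain t where t: "s = Suc t" using q(1) by (cases s) auto
    have sD: "s \<notin> D" using q by auto
    have "int (K * t + \<Sum>(insert s D)) = n - int K"
      using q(4) q(2) sD t by (simp add: algebra_simps)
    then show "b \<in> {b\<in>Q K (n - int K). Suc (fst b) \<in> snd b}"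
      unfolding Q_def b using q t by auto
  qed
  show "(\<lambda>(t,E). (Suc t, E - {Suc t})) ` {b\<in>Q K (n - int K). Suc (fst b) \<in> snd b} \<subseteq> {a\<in>Q (Suc K) n. 2 \<le> fst a}"
  proof
    fix a assume "a \<in> (\<lambda>(t,E). (Suc t, E - {Suc t})) ` {b\<in>Q K (n - int K). Suc (fst b) \<in> snd b}"
    then obtain t E where a: "a = (Suc t, E - {Suc t})" and q: "0 < t" "finite E" "\<forall>x\<in>E. t < x"
      "int (K * t + \<Sum>E) = n - int K" "Suc t \<in> E" unfolding Q_def by auto
    have "\<Sum>E = Suc t + \<Sum>(E - {Suc t})" using q(2,5) by (simp add: sum.remove)
    then have "int (Suc K * Suc t + \<Sum>(E - {Suc t})) = n"
      using q(4) by (simp add: algebra_simps)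
    moreover have "\<forall>x\<in>E - {Suc t}. Suc t < x" using q(3) by force
    ultimately show "a \<in> {a\<in>Q (Suc K) n. 2 \<le> fst a}" unfolding Q_def a using q by (auto simp: algebra_simps)
  qed
qed

lemma bij2:
  "card {a\<in>Q (Suc K) n. \<not> 2 \<le> fst a} = card {E\<in>PS (n - int K). 1 \<in> E}"
proof (rule bij_betw_same_card[of "\<lambda>(s,D). insert 1 D"],
       rule bij_betw_byWitness[where f' = "\<lambda>E. (1, E - {1})"])
  show "\<forall>a\<in>{a\<in>Q (Suc K) n. \<not> 2 \<le> fst a}. (\<lambda>E. (1::nat, E - {1})) ((\<lambda>(s,D). insert 1 D) a) = a"
    unfolding Q_def by force
  show "\<forall>a\<in>{E\<in>PS (n - int K). 1 \<in> E}. (\<lambda>(s,D). insert 1 D) ((\<lambda>E. (1::nat, E - {1})) a) = a"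
    unfolding PS_def by (auto simp: insert_absorb)
  show "(\<lambda>(s,D). insert 1 D) ` {a\<in>Q (Suc K) n. \<not> 2 \<le> fst a} \<subseteq> {E\<in>PS (n - int K). 1 \<in> E}"
  proof
    fix b assume "b \<in> (\<lambda>(s,D). insert 1 D) ` {a\<in>Q (Suc K) n. \<not> 2 \<le> fst a}"
    then obtain s D where b: "b = insert 1 D" and m: "(s,D) \<in> Q (Suc K) n" "\<not> 2 \<le> s" by auto
    then have q: "s = 1" "finite D" "\<forall>x\<in>D. s < x"
      "int (Suc K * s + \<Sum>D) = n" unfolding Q_def by auto
    have sD: "1 \<notin> D" "0 \<notin> D" using q by auto
    have "int (\<Sum>(insert 1 D)) = n - int K"
      using q(4) q(2) sD q(1) by (simp add: algebra_simps)
    then show "b \<in> {E\<in>PS (n - int K). 1 \<in> E}"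
      unfolding PS_def b using q sD by auto
  qed
  show "(\<lambda>E. (1::nat, E - {1})) ` {E\<in>PS (n - int K). 1 \<in> E} \<subseteq> {a\<in>Q (Suc K) n. \<not> 2 \<le> fst a}"
  proof
    fix a assume "a \<in> (\<lambda>E. (1::nat, E - {1})) ` {E\<in>PS (n - int K). 1 \<in> E}"
    then obtain E where a: "a = (1, E - {1})" and q: "finite E" "0 \<notin> E"
      "int (\<Sum>E) = n - int K" "1 \<in> E" unfolding PS_def by auto
    have "\<Sum>E = 1 + \<Sum>(E - {1})" using q(1,4) by (simp add: sum.remove)
    then have "int (Suc K * 1 + \<Sum>(E - {1})) = n"
      using q(3) by (simp add: algebra_simps)
    moreover have "\<forall>x\<in>E - {1}. (1::nat) < x" using q(2) by (metis DiffE insertCI less_one nat_neq_iff)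
    ultimately show "a \<in> {a\<in>Q (Suc K) n. \<not> 2 \<le> fst a}" unfolding Q_def a using q by auto
  qed
qed

lemma bij3:
  "card {a\<in>Q K n. 2 \<le> fst a} = card {b\<in>Q K (n - int K). Suc (fst b) \<notin> snd b}"
proof (rule bij_betw_same_card[of "\<lambda>(s,D). (s - 1, D)"],
       rule bij_betw_byWitness[where f' = "\<lambda>(t,E). (Suc t, E)"])
  show "\<forall>a\<in>{a\<in>Q K n. 2 \<le> fst a}. (\<lambda>(t,E). (Suc t, E)) ((\<lambda>(s,D). (s - 1, D)) a) = a"
    unfolding Q_def by auto
  show "\<forall>a\<in>{b\<in>Q K (n - int K). Suc (fst b) \<notin> snd b}. (\<lambda>(s,D). (s - 1, D)) ((\<lambda>(t,E). (Suc t, E)) a) = a"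
    unfolding Q_def by auto
  show "(\<lambda>(s,D). (s - 1, D)) ` {a\<in>Q K n. 2 \<le> fst a} \<subseteq> {b\<in>Q K (n - int K). Suc (fst b) \<notin> snd b}"
  proof
    fix b assume "b \<in> (\<lambda>(s,D). (s - 1, D)) ` {a\<in>Q K n. 2 \<le> fst a}"
    then obtain s D where b: "b = (s - 1, D)" and q: "2 \<le> s" "finite D" "\<forall>x\<in>D. s < x"
      "int (K * s + \<Sum>D) = n" unfolding Q_def by auto
    obtain t where t: "s = Suc t" using q(1) by (cases s) auto
    have "int (K * t + \<Sum>D) = n - int K"
      using q(4) t by (simp add: algebra_simps)
    then show "b \<in> {b\<in>Q K (n - int K). Suc (fst b) \<notin> snd b}"
      unfolding Q_def b using q t by auto
  qed
  show "(\<lambda>(t,E). (Suc t, E)) ` {b\<in>Q K (n - int K). Suc (fst b) \<notin> snd b} \<subseteq> {a\<in>Q K n. 2 \<le> fst a}"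
  proof
    fix a assume "a \<in> (\<lambda>(t,E). (Suc t, E)) ` {b\<in>Q K (n - int K). Suc (fst b) \<notin> snd b}"
    then obtain t E where a: "a = (Suc t, E)" and q: "0 < t" "finite E" "\<forall>x\<in>E. t < x"
      "int (K * t + \<Sum>E) = n - int K" "Suc t \<notin> E" unfolding Q_def by auto
    have "int (K * Suc t + \<Sum>E) = n"
      using q(4) by (simp add: algebra_simps)
    moreover have "\<forall>x\<in>E. Suc t < x" using q(3,5) by (metis Suc_lessI)
    ultimately show "a \<in> {a\<in>Q K n. 2 \<le> fst a}" unfolding Q_def a using q by (auto simp: algebra_simps)
  qed
qed

lemma bij4:
  "card {a\<in>Q K n. \<not> 2 \<le> fst a} = card {E\<in>PS (n - int K). 1 \<notin> E}"
proof (rule bij_betw_same_card[of "\<lambda>(s,D). D"],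
       rule bij_betw_byWitness[where f' = "\<lambda>E. (1, E)"])
  show "\<forall>a\<in>{a\<in>Q K n. \<not> 2 \<le> fst a}. (\<lambda>E. (1::nat, E)) ((\<lambda>(s,D). D) a) = a"
    unfolding Q_def by force
  show "\<forall>a\<in>{E\<in>PS (n - int K). 1 \<notin> E}. (\<lambda>(s,D). D) ((\<lambda>E. (1::nat, E)) a) = a"
    by auto
  show "(\<lambda>(s,D). D) ` {a\<in>Q K n. \<not> 2 \<le> fst a} \<subseteq> {E\<in>PS (n - int K). 1 \<notin> E}"
  proof
    fix b assume "b \<in> (\<lambda>(s,D). D) ` {a\<in>Q K n. \<not> 2 \<le> fst a}"
    then obtain s D where b: "b = D" and m: "(s,D) \<in> Q K n" "\<not> 2 \<le> s" by auto
    then have q: "s = 1" "finite D" "\<forall>x\<in>D. s < x"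
      "int (K * s + \<Sum>D) = n" unfolding Q_def by auto
    have sD: "1 \<notin> D" "0 \<notin> D" using q by auto
    have "int (\<Sum>D) = n - int K"
      using q(4) q(1) by (simp add: algebra_simps)
    then show "b \<in> {E\<in>PS (n - int K). 1 \<notin> E}"
      unfolding PS_def b using q sD by auto
  qed
  show "(\<lambda>E. (1::nat, E)) ` {E\<in>PS (n - int K). 1 \<notin> E} \<subseteq> {a\<in>Q K n. \<not> 2 \<le> fst a}"
  proof
    fix a assume "a \<in> (\<lambda>E. (1::nat, E)) ` {E\<in>PS (n - int K). 1 \<notin> E}"
    then obtain E where a: "a = (1, E)" and q: "finite E" "0 \<notin> E"
      "int (\<Sum>E) = n - int K" "1 \<notin> E" unfolding PS_def by auto
    have "int (K * 1 + \<Sum>E) = n"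
      using q(3) by (simp add: algebra_simps)
    moreover have "\<forall>x\<in>E. (1::nat) < x" using q(2,4) by (metis less_one nat_neq_iff)
    ultimately show "a \<in> {a\<in>Q K n. \<not> 2 \<le> fst a}" unfolding Q_def a using q by auto
  qed
qed

theorem theorem1p1:
  fixes k :: nat and n :: int
  assumes "k \<ge> 2" and "n \<ge> 1"
  shows "sptd k n + sptd (k - 1) n = sptd (k - 1) (n - int k + 1) + pd (n - int k + 1)"
proof -
  obtain K where K: "k = Suc K" "K \<ge> 1" using assms(1) by (cases k) auto
  have e1: "k - 1 = K" "n - int k + 1 = n - int K" using K by auto
  have "sptd k n + sptd (k - 1) n = card (Q (Suc K) n) + card (Q K n)"
    using K sptd_Q[of "Suc K" n] sptd_Q[of K n] by simp
  also have "\<dots> = (card {a\<in>Q (Suc K) n. 2 \<le> fst a} + card {a\<in>Q (Suc K) n. \<not> 2 \<le> fst a})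
     + (card {a\<in>Q K n. 2 \<le> fst a} + card {a\<in>Q K n. \<not> 2 \<le> fst a})"
    using card_split[OF finite_Q[of "Suc K" n], of "\<lambda>a. 2 \<le> fst a"]
      card_split[OF finite_Q[OF K(2), of n], of "\<lambda>a. 2 \<le> fst a"] by simp
  also have "\<dots> = (card {b\<in>Q K (n - int K). Suc (fst b) \<in> snd b} + card {b\<in>Q K (n - int K). Suc (fst b) \<notin> snd b})
     + (card {E\<in>PS (n - int K). 1 \<in> E} + card {E\<in>PS (n - int K). 1 \<notin> E})"
    using bij1 bij2 bij3 bij4 by simp
  also have "\<dots> = card (Q K (n - int K)) + card (PS (n - int K))"
    using card_split[of "Q K (n - int K)" "\<lambda>b. Suc (fst b) \<in> snd b"]
      card_split[of "PS (n - int K)" "\<lambda>E. 1 \<in> E"] finite_Q[OF K(2)] finite_PS by simp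
  also have "\<dots> = sptd (k - 1) (n - int k + 1) + pd (n - int k + 1)"
    unfolding e1 using sptd_Q[OF K(2)] pd_PS by simp
  finally show ?thesis .
qed

end
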